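(* Let $\mu_\varepsilon$ be a Borel probability measure on $\mathbb{R}$ and $\eta\in\mathcal{M}(\mathbb{R},\mathcal{B}(\mathbb{R}))$. If $\mu_\varepsilon$ or $\eta$ is continuous (has no atoms), then $|\pi_{\eta*\mu_\varepsilon}|(\mathbb{R})\ge1$.
   Context: $\mathcal{M}(\mathbb{R},\mathcal{B}(\mathbb{R}))$ is the space of finite signed Borel measures on $\mathbb{R}$; $|\cdot|$ denotes total variation. $(\mu*\nu)(A):=\int\int\mathbf 1_A(x+y)\nu(dx)\mu(dy)$. $\pi_{\eta*\mu_\varepsilon}:=\delta_{\{0\}}-\eta*\mu_\varepsilon$. *)

theory Defs
  imports "HOL-Probability.Probability"
begin

text \<open>A finite signed Borel measure on the reals is represented by a pair (P, N) of finite
Borel measures via its value  eta A = P(A) - N(A)  (every finite signed measure arises this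
way, e.g. from its Jordan decomposition).\<close>

definition signed_val :: "real measure \<Rightarrow> real measure \<Rightarrow> real set \<Rightarrow> real" where
  "signed_val P N A = measure P A - measure N A"

definition sconv :: "real measure \<Rightarrow> real measure \<Rightarrow> real measure \<Rightarrow> real set \<Rightarrow> real" where
  "sconv P N M A =
     (\<integral>y. (\<integral>x. indicator A (x + y) \<partial>M) \<partial>P) - (\<integral>y. (\<integral>x. indicator A (x + y) \<partial>M) \<partial>N)"

definition pi_conv :: "real measure \<Rightarrow> real measure \<Rightarrow> real measure \<Rightarrow> real set \<Rightarrow> real" where
  "pi_conv P N M A = indicator A (0::real) - sconv P N M A"

definition total_variation_R :: "(real set \<Rightarrow> real) \<Rightarrow> ereal" where
  "total_variation_R f = (SUP \<A> \<in> {\<A>. finite \<A> \<and> \<A> \<subseteq> sets borel \<and> disjoint \<A>}.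
        ereal (\<Sum>A\<in>\<A>. \<bar>f A\<bar>))"

end

theory Submission
  imports Defs
begin

lemma inner_ind:
  fixes M :: "real measure"
  assumes "sets M = sets borel"
  shows "(\<integral>x. indicator {0::real} (x + y) \<partial>M) = measure M {-y}"
proof -
  have sp: "space M = UNIV" using sets_eq_imp_space_eq[OF assms] by simp
  have "(\<lambda>x. indicator {0::real} (x + y) :: real) = indicator {-y}"
    by (auto simp: indicator_def fun_eq_iff)
  then show ?thesis by (simp add: sp)
qed

lemma swap_ind:
  fixes M P :: "real measure"
  assumes "finite_measure M" "sets M = sets borel" "finite_measure P" "sets P = sets borel"
  shows "(\<integral>y. (\<integral>x. indicator {0::real} (x + y) \<partial>M) \<partial>P) = (\<integral>x. measure P {-x} \<partial>M)"
proof -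
  interpret M: finite_measure M by fact
  interpret P: finite_measure P by fact
  interpret MP: pair_sigma_finite M P by standard
  interpret MPf: finite_measure "M \<Otimes>\<^sub>M P" by (rule finite_measure_pair_measure) fact+
  have meas: "(\<lambda>(x, y). indicator {0::real} (x + y) :: real) \<in> borel_measurable (M \<Otimes>\<^sub>M P)"
  proof -
    have "(\<lambda>(x, y). indicator {0::real} (x + y) :: real) \<in> borel_measurable (borel \<Otimes>\<^sub>M borel)"
      by measurable
    moreover have "sets (M \<Otimes>\<^sub>M P) = sets (borel \<Otimes>\<^sub>M borel)"
      by (rule sets_pair_measure_cong) (use assms in auto)
    ultimately show ?thesis using measurable_cong_sets by blast
  qed
  have int: "integrable (M \<Otimes>\<^sub>M P) (\<lambda>(x, y). indicator {0::real} (x + y) :: real)"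
    apply (rule MPf.integrable_const_bound[where B=1])
    using meas by (auto simp: indicator_def)
  have "(\<integral>y. (\<integral>x. (indicator {0::real} (x + y) :: real) \<partial>M) \<partial>P) = (\<integral>x. (\<integral>y. (indicator {0::real} (x + y) :: real) \<partial>P) \<partial>M)"
    using MP.Fubini_integral[OF int] by simp
  also have "\<dots> = (\<integral>x. measure P {-x} \<partial>M)"
  proof (rule Bochner_Integration.integral_cong[OF refl])
    fix x
    have "(\<integral>y. indicator {0::real} (x + y) \<partial>P) = (\<integral>y. indicator {0::real} (y + x) \<partial>P)"
      by (simp add: add.commute)
    also have "\<dots> = measure P {-x}" by (rule inner_ind[OF assms(4)])
    finally show "(\<integral>y. indicator {0::real} (x + y) \<partial>P) = measure P {-x}" .
  qed
  finally show ?thesis .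
qed

theorem lemma7:
  fixes M P N :: "real measure"
  assumes "prob_space M" and "sets M = sets borel"
    and "finite_measure P" and "sets P = sets borel"
    and "finite_measure N" and "sets N = sets borel"
    and "(\<forall>x. measure M {x} = 0) \<or> (\<forall>x. signed_val P N {x} = 0)"
  shows "total_variation_R (pi_conv P N M) \<ge> 1"
proof -
  have fM: "finite_measure M" using assms(1) by (simp add: prob_space_def)
  have s0: "sconv P N M {0} = 0"
    using assms(7)
  proof
    assume h: "\<forall>x. measure M {x} = 0"
    show ?thesis unfolding sconv_def inner_ind[OF assms(2)] using h by simp
  next
    assume h: "\<forall>x. signed_val P N {x} = 0"
    show ?thesis unfolding sconv_def swap_ind[OF fM assms(2) assms(3) assms(4)]
        swap_ind[OF fM assms(2) assms(5) assms(6)]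
      using h by (simp add: signed_val_def)
  qed
  have "{{0::real}} \<in> {\<A>. finite \<A> \<and> \<A> \<subseteq> sets borel \<and> disjoint \<A>}"
    by (auto simp: disjoint_def)
  then have "ereal (\<Sum>A\<in>{{0::real}}. \<bar>pi_conv P N M A\<bar>) \<le> total_variation_R (pi_conv P N M)"
    unfolding total_variation_R_def by (rule SUP_upper)
  moreover have "(\<Sum>A\<in>{{0::real}}. \<bar>pi_conv P N M A\<bar>) = 1"
    using s0 by (simp add: pi_conv_def)
  ultimately show ?thesis by (simp add: one_ereal_def)
qed

end
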